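(* For every integer $k\ge2$, the matrices $A_k=\begin{pmatrix}1&k\\k-1&1\end{pmatrix}$ and $B_k=\begin{pmatrix}1&(k-1)k\\1&1\end{pmatrix}$ are unitally shift equivalent.
   Context: Two square $\mathbb{N}$-matrices $A,B$ are shift equivalent if there are an integer $\ell\ge1$ and rectangular $\mathbb{N}$-matrices $R,S$ with $A^\ell=RS$, $B^\ell=SR$, $AR=RB$, $BS=SA$. Such a shift equivalence $(R,S)$ is unital if there are $m,k\in\mathbb{N}$ with $(B^t)^mR^t\underline{1}=(B^t)^{m+k}\underline{1}$, where $\underline1$ is the all-ones column vector. $A$ and $B$ are unitally shift equivalent if a unital shift equivalence from $A$ to $B$ exists. *)

theory Defs
  imports "Jordan_Normal_Form.Matrix"
begin

definition shift_equiv_via :: "nat mat \<Rightarrow> nat mat \<Rightarrow> nat \<Rightarrow> nat mat \<Rightarrow> nat mat \<Rightarrow> bool" where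
  "shift_equiv_via A B l R S \<longleftrightarrow>
     A \<in> carrier_mat (dim_row A) (dim_row A) \<and>
     B \<in> carrier_mat (dim_row B) (dim_row B) \<and>
     R \<in> carrier_mat (dim_row A) (dim_row B) \<and>
     S \<in> carrier_mat (dim_row B) (dim_row A) \<and>
     l \<ge> 1 \<and>
     A ^\<^sub>m l = R * S \<and> B ^\<^sub>m l = S * R \<and> A * R = R * B \<and> B * S = S * A"

definition ones_vec :: "nat \<Rightarrow> nat vec" where
  "ones_vec n = vec n (\<lambda>_. 1)"

definition unital_shift_equiv_via :: "nat mat \<Rightarrow> nat mat \<Rightarrow> nat \<Rightarrow> nat mat \<Rightarrow> nat mat \<Rightarrow> bool" where
  "unital_shift_equiv_via A B l R S \<longleftrightarrow>
     shift_equiv_via A B l R S \<and>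
     (\<exists>m k. ((transpose_mat B) ^\<^sub>m m) *\<^sub>v ((transpose_mat R) *\<^sub>v ones_vec (dim_row A))
            = ((transpose_mat B) ^\<^sub>m (m + k)) *\<^sub>v ones_vec (dim_row B))"

definition unitally_shift_equivalent :: "nat mat \<Rightarrow> nat mat \<Rightarrow> bool" where
  "unitally_shift_equivalent A B \<longleftrightarrow> (\<exists>l R S. unital_shift_equiv_via A B l R S)"

end

theory Submission imports Defs begin

fun pq :: "nat \<Rightarrow> nat \<Rightarrow> nat \<times> nat" where
  "pq D 0 = (1, 0)"
| "pq D (Suc n) = (fst (pq D n) + D * snd (pq D n), fst (pq D n) + snd (pq D n))"

lemma pq_real:
  fixes s :: real assumes "s^2 = real D"
  shows "real (fst (pq D n)) + s * real (snd (pq D n)) = (1+s)^n \<and>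
         real (fst (pq D n)) - s * real (snd (pq D n)) = (1-s)^n"
proof (induction n)
  case 0 then show ?case by simp
next
  case (Suc n)
  let ?p = "real (fst (pq D n))" and ?q = "real (snd (pq D n))"
  have e: "real D = s*s" using assms by (simp add: power2_eq_square)
  have "(1+s)^Suc n = (?p + s*?q)*(1+s)" using Suc by simp
  moreover have "(1-s)^Suc n = (?p - s*?q)*(1-s)" using Suc by simp
  ultimately show ?case by (simp add: e algebra_simps)
qed

lemma exists_good:
  fixes j :: nat assumes j: "j \<ge> 1"
  shows "\<exists>n\<ge>1. j * snd (pq ((j+1)*j) n) \<le> fst (pq ((j+1)*j) n) \<and>
                fst (pq ((j+1)*j) n) \<le> (j+1) * snd (pq ((j+1)*j) n)"
proof -
  define D where "D = (j+1)*j"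
  define s where "s = sqrt (real D)"
  have s2: "s^2 = real D" unfolding s_def by simp
  have sj: "real j < s" unfolding s_def D_def
    by (rule real_less_rsqrt) (use j in \<open>simp add: power2_eq_square algebra_simps\<close>)
  have sk: "s < real j + 1" unfolding s_def D_def
    by (rule real_sqrt_less_mono[of _ "(real j + 1)^2", simplified]) (simp add: power2_eq_square algebra_simps)
  have s1: "s \<ge> 1" using sj j by linarith
  define \<epsilon> where "\<epsilon> = min (s - j) (j + 1 - s)"
  have ep: "\<epsilon> > 0" using sj sk by (simp add: \<epsilon>_def)
  define t where "t = (s-1)/(s+1)"
  have t1: "t < 1" unfolding t_def using s1 by (simp add: divide_less_eq)
  have "\<epsilon>/(2*s+\<epsilon>) > 0" using ep s1 by simp
  then obtain n where n: "t^n < \<epsilon>/(2*s+\<epsilon>)" using real_arch_pow_inv t1 by blast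
  have "\<epsilon>/(2*s+\<epsilon>) < 1" using ep s1 by simp
  then have n1: "n \<ge> 1" using n by (cases n) auto
  let ?p = "real (fst (pq D n))" and ?q = "real (snd (pq D n))"
  have PQ: "?p + s * ?q = (1+s)^n" "?p - s * ?q = (1-s)^n" using pq_real[OF s2] by auto
  have tn: "t^n = (s-1)^n / (s+1)^n" unfolding t_def by (simp add: power_divide)
  have pos: "(s+1)^n > 0" using s1 by simp
  have k0: "(s-1)^n < \<epsilon>/(2*s+\<epsilon>) * (s+1)^n"
    using n pos unfolding tn by (simp add: pos_divide_less_eq)
  have "(2*s+\<epsilon>) * (s-1)^n < (2*s+\<epsilon>) * (\<epsilon>/(2*s+\<epsilon>) * (s+1)^n)"
    using k0 ep s1 by (intro mult_strict_left_mono) auto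
  also have "\<dots> = \<epsilon> * (1+s)^n" using ep s1 by (simp add: add.commute)
  finally have key: "(2*s+\<epsilon>) * (s-1)^n < \<epsilon> * (1+s)^n" .
  have absn: "\<bar>(1-s)^n\<bar> = (s-1)^n" using s1 by (simp add: power_abs)
  have q2: "2*s*?q = (1+s)^n - (1-s)^n" using PQ by (simp add: algebra_simps)
  have "(1-s)^n \<le> (s-1)^n" using absn by linarith
  then have "2*s*?q \<ge> (1+s)^n - (s-1)^n" using q2 by linarith
  then have "\<epsilon>*((1+s)^n - (s-1)^n) \<le> \<epsilon>*(2*s*?q)"
    using ep by (intro mult_left_mono) auto
  then have "2*s*(s-1)^n \<le> 2*s*(\<epsilon>*?q)"
    using key by (simp add: algebra_simps)
  then have b: "(s-1)^n \<le> \<epsilon>*?q" using s1 by simp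
  have d: "\<bar>?p - s*?q\<bar> \<le> \<epsilon>*?q" using PQ absn b by simp
  have qn: "?q \<ge> 0" by simp
  have "real j * ?q \<le> (s - \<epsilon>) * ?q" using qn by (intro mult_right_mono) (auto simp: \<epsilon>_def)
  then have L: "real j * ?q \<le> ?p" using d by (simp add: algebra_simps abs_le_iff)
  have "(s + \<epsilon>) * ?q \<le> (real j + 1) * ?q" using qn by (intro mult_right_mono) (auto simp: \<epsilon>_def)
  then have U: "?p \<le> (real j + 1) * ?q" using d by (simp add: algebra_simps abs_le_iff)
  have "j * snd (pq D n) \<le> fst (pq D n)" using L by (simp flip: of_nat_mult of_nat_le_iff)
  moreover have "fst (pq D n) \<le> (j+1) * snd (pq D n)" using U
    by (metis of_nat_le_iff of_nat_mult of_nat_Suc add.commute Suc_eq_plus1)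
  ultimately show ?thesis using n1 unfolding D_def by blast
qed

definition M2 :: "nat \<Rightarrow> nat \<Rightarrow> nat \<Rightarrow> nat \<Rightarrow> nat mat" where
 "M2 a b c d = mat 2 2 (\<lambda>(i,j). if i = 0 then (if j = 0 then a else b) else (if j = 0 then c else d))"
definition V2 :: "nat \<Rightarrow> nat \<Rightarrow> nat vec" where
 "V2 x y = vec 2 (\<lambda>i. if i = 0 then x else y)"
lemma less2: "(i::nat) < 2 \<longleftrightarrow> i = 0 \<or> i = 1" by auto
lemma sum2: "(\<Sum>i::nat = 0..<2. f i) = (f 0 + f 1 :: nat)" by (simp add: numeral_2_eq_2)
lemma M2_carrier[simp]: "M2 a b c d \<in> carrier_mat 2 2"
  by (simp add: M2_def)
lemma M2_dims[simp]: "dim_row (M2 a b c d) = 2" "dim_col (M2 a b c d) = 2"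
  by (simp_all add: M2_def)
lemma M2_rows: "mat_of_rows_list 2 [[a,b],[c,d]] = M2 a b c d"
  by (rule eq_matI) (auto simp: M2_def mat_of_rows_list_def less2)
lemma M2_mult: "M2 a b c d * M2 e f g h = M2 (a*e+b*g) (a*f+b*h) (c*e+d*g) (c*f+d*h)"
  by (rule eq_matI) (auto simp: M2_def scalar_prod_def row_def col_def less2 sum2)
lemma M2_transpose: "transpose_mat (M2 a b c d) = M2 a c b d"
  by (rule eq_matI) (auto simp: M2_def less2)
lemma M2_vec: "M2 a b c d *\<^sub>v V2 x y = V2 (a*x+b*y) (c*x+d*y)"
  by (rule eq_vecI) (auto simp: M2_def V2_def scalar_prod_def row_def less2 sum2)
lemma ones2: "ones_vec 2 = V2 1 1"
  by (rule eq_vecI) (auto simp: ones_vec_def V2_def)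
lemma M2_one: "1\<^sub>m 2 = M2 1 0 0 1"
  by (rule eq_matI) (auto simp: M2_def less2)

lemma M2_pow: "M2 1 x y 1 ^\<^sub>m t = M2 (fst (pq (x*y) t)) (x * snd (pq (x*y) t)) (y * snd (pq (x*y) t)) (fst (pq (x*y) t))"
proof (induction t)
  case 0 then show ?case by (simp add: M2_one)
next
  case (Suc t)
  then show ?case by (simp add: M2_mult algebra_simps)
qed

theorem mainTheorem10:
  fixes k :: nat
  assumes "k \<ge> 2"
  shows "unitally_shift_equivalent
           (mat_of_rows_list 2 [[1, k], [k - 1, 1]])
           (mat_of_rows_list 2 [[1, (k - 1) * k], [1, 1]])"
proof -
  define j where "j = k - 1"
  have j1: "j \<ge> 1" and kj: "k = j + 1" using assms by (auto simp: j_def)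
  define D where "D = k * j"
  obtain n where n1: "n \<ge> 1" and L: "j * snd (pq D n) \<le> fst (pq D n)"
     and U: "fst (pq D n) \<le> k * snd (pq D n)"
    using exists_good[OF j1] unfolding D_def kj by blast
  define P where "P = fst (pq D n)"
  define Q where "Q = snd (pq D n)"
  obtain b where bd: "P = j*Q + b" using L unfolding P_def Q_def by (metis le_iff_add)
  obtain a where ad: "k*Q = P + a" using U unfolding P_def Q_def by (metis le_iff_add)
  have Qd: "Q = a + b" using ad bd kj by simp
  have Pd: "P = j*(a+b) + b" using bd Qd by simp
  obtain t where nt: "n = Suc t" using n1 by (cases n) auto
  define P' where "P' = fst (pq D t)"
  define Q' where "Q' = snd (pq D t)"
  have Pn: "P = P' + D*Q'" "Q = P' + Q'" unfolding P_def Q_def P'_def Q'_def nt by simp_all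
  define A where "A = M2 1 k j 1"
  define B where "B = M2 1 (j*k) 1 1"
  define R where "R = M2 a (k*b) b (j*a)"
  define S where "S = M2 j k 1 1"
  have A: "mat_of_rows_list 2 [[1, k], [k - 1, 1]] = A" by (simp add: A_def M2_rows j_def)
  have B: "mat_of_rows_list 2 [[1, (k - 1) * k], [1, 1]] = B" by (simp add: B_def M2_rows j_def)
  have An: "A ^\<^sub>m n = M2 P (k*Q) (j*Q) P"
    unfolding A_def M2_pow P_def Q_def D_def ..
  have Bn: "B ^\<^sub>m n = M2 P (D*Q) Q P"
    unfolding B_def M2_pow P_def Q_def D_def by (simp add: mult.commute)
  have Bt: "transpose_mat B ^\<^sub>m t = M2 P' Q' (D*Q') P'"
    unfolding B_def M2_transpose M2_pow P'_def Q'_def D_def by (simp add: mult.commute)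
  have dB: "dim_row B = 2" by (simp add: B_def)
  have "shift_equiv_via A B n R S"
    unfolding shift_equiv_via_def
  proof (intro conjI)
    show "A ^\<^sub>m n = R * S" unfolding An R_def S_def M2_mult
      by (simp add: Pd Qd kj algebra_simps)
    show "B ^\<^sub>m n = S * R" unfolding Bn R_def S_def M2_mult
      by (simp add: Pd Qd kj D_def algebra_simps)
    show "A * R = R * B" unfolding A_def B_def R_def M2_mult
      by (simp add: kj algebra_simps)
    show "B * S = S * A" unfolding A_def B_def S_def M2_mult
      by (simp add: kj algebra_simps)
  qed (use n1 in \<open>simp_all add: A_def B_def R_def S_def\<close>)
  moreover have "(transpose_mat B ^\<^sub>m 0) *\<^sub>v (transpose_mat R *\<^sub>v ones_vec (dim_row A))
            = (transpose_mat B ^\<^sub>m (0 + t)) *\<^sub>v ones_vec (dim_row B)"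
  proof -
    have "transpose_mat B ^\<^sub>m 0 = M2 1 0 0 1" by (simp add: B_def M2_transpose M2_one)
    moreover have "transpose_mat R *\<^sub>v ones_vec (dim_row A) = V2 Q P"
      by (simp add: R_def A_def M2_transpose ones2 M2_vec Pd Qd kj algebra_simps)
    moreover have "(transpose_mat B ^\<^sub>m (0 + t)) *\<^sub>v ones_vec (dim_row B) = V2 Q P"
      by (simp only: add_0 Bt dB ones2 M2_vec) (simp add: Pn algebra_simps)
    ultimately show ?thesis by (simp add: M2_vec)
  qed
  ultimately have "unital_shift_equiv_via A B n R S"
    unfolding unital_shift_equiv_via_def by blast
  then show ?thesis unfolding unitally_shift_equivalent_def A B by blast
qed

end
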